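(* For every integer $n\ge1$ there is an rpoNFA $\mathcal{A}_n$ over an $n$-letter alphabet with $n(n+2)$ states such that the shortest word not accepted by $\mathcal{A}_n$ has length $\binom{2n}{n}-1$. Consequently, every DFA accepting $L(\mathcal{A}_n)$ has at least $\binom{2n}{n}$ states.
   Context: A poNFA is an NFA whose reachability relation ($p\le q$ iff $q\in p\cdot w$ for some word $w$) is a partial order; an rpoNFA is a poNFA such that for every state $q$ and letter $a$, $q\in q\cdot a$ implies $q\cdot a=\{q\}$. *)

theory Defs
  imports Main
begin

record ('s, 'a) nfa =
  states :: "'s set"
  alpha  :: "'a set"
  trans  :: "'s \<Rightarrow> 'a \<Rightarrow> 's set"
  init   :: "'s set"
  fin    :: "'s set"

definition nfa :: "('s, 'a) nfa \<Rightarrow> bool" where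
  "nfa A \<longleftrightarrow> finite (states A) \<and> finite (alpha A) \<and>
     init A \<subseteq> states A \<and> fin A \<subseteq> states A \<and>
     (\<forall>q\<in>states A. \<forall>a\<in>alpha A. trans A q a \<subseteq> states A)"

definition nfa_run :: "('s, 'a) nfa \<Rightarrow> 's set \<Rightarrow> 'a list \<Rightarrow> 's set" where
  "nfa_run A S w = foldl (\<lambda>T a. \<Union>q\<in>T. trans A q a) S w"

definition nfa_lang :: "('s, 'a) nfa \<Rightarrow> 'a list set" where
  "nfa_lang A = {w \<in> lists (alpha A). nfa_run A (init A) w \<inter> fin A \<noteq> {}}"

definition reach :: "('s, 'a) nfa \<Rightarrow> 's \<Rightarrow> 's \<Rightarrow> bool" where
  "reach A p q \<longleftrightarrow> (\<exists>w\<in>lists (alpha A). q \<in> nfa_run A {p} w)"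

(* reachability is always reflexive and transitive; partial order = antisymmetric *)
definition poNFA :: "('s, 'a) nfa \<Rightarrow> bool" where
  "poNFA A \<longleftrightarrow> nfa A \<and>
     (\<forall>p\<in>states A. \<forall>q\<in>states A. reach A p q \<and> reach A q p \<longrightarrow> p = q)"

definition rpoNFA :: "('s, 'a) nfa \<Rightarrow> bool" where
  "rpoNFA A \<longleftrightarrow> poNFA A \<and>
     (\<forall>q\<in>states A. \<forall>a\<in>alpha A. q \<in> trans A q a \<longrightarrow> trans A q a = {q})"

record ('q, 'a) dfa =
  dstates :: "'q set"
  dalpha  :: "'a set"
  dtrans  :: "'q \<Rightarrow> 'a \<Rightarrow> 'q"
  dinit   :: "'q"
  dfin    :: "'q set"

definition dfa :: "('q, 'a) dfa \<Rightarrow> bool" where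
  "dfa D \<longleftrightarrow> finite (dstates D) \<and> finite (dalpha D) \<and>
     dinit D \<in> dstates D \<and> dfin D \<subseteq> dstates D \<and>
     (\<forall>q\<in>dstates D. \<forall>a\<in>dalpha D. dtrans D q a \<in> dstates D)"

definition dfa_lang :: "('q, 'a) dfa \<Rightarrow> 'a list set" where
  "dfa_lang D = {w \<in> lists (dalpha D). foldl (dtrans D) (dinit D) w \<in> dfin D}"

end

theory Submission
  imports Defs
begin

definition Dset :: "nat \<Rightarrow> nat \<Rightarrow> nat \<Rightarrow> nat set" where
  "Dset n i v = (\<lambda>j. j * Suc n + v) ` {..<i}"

definition tr :: "nat \<Rightarrow> nat \<Rightarrow> nat \<Rightarrow> nat set" where
  "tr n q a = (if q < n * Suc n then
     (if a < q div Suc n then {q}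
      else if a = q div Suc n then
        (if q mod Suc n < n then Dset n (Suc (q div Suc n)) (Suc (q mod Suc n)) else {})
      else if a < n then (if q mod Suc n < n then {n * Suc n} else {}) else {})
   else if q = n * Suc n then {q} else {})"

definition Aut :: "nat \<Rightarrow> (nat, nat) nfa" where
  "Aut n = \<lparr>states = {..<n * (n + 2)}, alpha = {..<n}, trans = tr n, init = Dset n n 0,
     fin = insert (n * Suc n) {q. q < n * Suc n \<and> q mod Suc n < n}\<rparr>"

fun W :: "nat \<Rightarrow> nat \<Rightarrow> nat list" where
  "W 0 m = []"
| "W (Suc i) 0 = []"
| "W (Suc i) (Suc m) = W i (Suc m) @ [i] @ W (Suc i) m"

lemma W_set: "set (W i m) \<subseteq> {..<i}"
  by (induction i m rule: W.induct) auto

lemma W_len: "length (W i m) = (i + m choose i) - 1"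
proof (induction i m rule: W.induct)
  case (3 i m)
  have p1: "(i + Suc m choose i) \<ge> 1" using zero_less_binomial[of i "i + Suc m"] by linarith
  have p2: "(Suc i + m choose Suc i) \<ge> 1" using zero_less_binomial[of "Suc i" "Suc i + m"] by linarith
  have "(Suc i + Suc m choose Suc i) = (i + Suc m choose i) + (i + Suc m choose Suc i)"
    by (metis add_Suc binomial_Suc_Suc)
  moreover have "i + Suc m = Suc i + m" by simp
  ultimately show ?case using 3 p1 p2 by simp
qed auto

declare mult_Suc_right[simp del]

lemma dec:
  assumes "j < n" "v \<le> n"
  shows "(j * Suc n + v) div Suc n = j" "(j * Suc n + v) mod Suc n = v"
    "j * Suc n + v < n * Suc n"
proof -
  show "(j * Suc n + v) div Suc n = j" using assms by simp
  show "(j * Suc n + v) mod Suc n = v" using assms by simp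
  have "j * Suc n + v < Suc j * Suc n" using assms by simp
  also have "\<dots> \<le> n * Suc n" using assms by (intro mult_le_mono1) simp
  finally show "j * Suc n + v < n * Suc n" .
qed

lemma div_lt: "q < n * Suc n \<Longrightarrow> q div Suc n < n"
  by (simp add: less_mult_imp_div_less)

lemma run_Nil: "nfa_run A S [] = S" by (simp add: nfa_run_def)
lemma run_Cons: "nfa_run A S (a # w) = nfa_run A (\<Union>q\<in>S. trans A q a) w"
  by (simp add: nfa_run_def)
lemma run_append: "nfa_run A S (u @ v) = nfa_run A (nfa_run A S u) v"
  by (simp add: nfa_run_def)
lemma run_Un: "nfa_run A (S \<union> T) w = nfa_run A S w \<union> nfa_run A T w"
  by (induction w arbitrary: S T) (simp_all add: run_Nil run_Cons UN_Un)
lemma run_mono: "S \<subseteq> T \<Longrightarrow> nfa_run A S w \<subseteq> nfa_run A T w"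
proof -
  assume "S \<subseteq> T"
  hence e: "S \<union> T = T" by blast
  have "nfa_run A S w \<subseteq> nfa_run A S w \<union> nfa_run A T w" by blast
  also have "\<dots> = nfa_run A (S \<union> T) w" by (rule run_Un[symmetric])
  also have "\<dots> = nfa_run A T w" using e by simp
  finally show ?thesis .
qed
lemma run_empty: "nfa_run A {} w = {}"
  by (induction w) (simp_all add: run_Nil run_Cons)
lemma run_fix: "(\<forall>a\<in>set w. trans A q a = {q}) \<Longrightarrow> nfa_run A {q} w = {q}"
  by (induction w) (simp_all add: run_Nil run_Cons)

lemma trans_Aut[simp]: "trans (Aut n) = tr n" by (simp add: Aut_def)

lemma tr_F: "tr n (n * Suc n) a = {n * Suc n}" by (simp add: tr_def)

lemma run_F: "nfa_run (Aut n) {n * Suc n} w = {n * Suc n}"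
  by (intro run_fix ballI) (simp only: trans_Aut tr_F)

lemma R: "i \<le> n \<Longrightarrow> v \<le> n \<Longrightarrow>
  nfa_run (Aut n) (Dset n i v) (W i (n - v)) \<subseteq> Dset n i n"
proof (induction "i + (n - v)" arbitrary: i v rule: less_induct)
  case less
  show ?case
  proof (cases i)
    case 0 then show ?thesis by (simp add: Dset_def run_empty)
  next
    case (Suc i')
    show ?thesis
    proof (cases "v = n")
      case True then show ?thesis by (simp add: Suc run_Nil)
    next
      case False
      then have vn: "v < n" using less by simp
      have i'n: "i' < n" using Suc less by simp
      have Wsplit: "W i (n - v) = W i' (n - v) @ [i'] @ W i (n - Suc v)"
        using vn Suc by (metis Suc_diff_Suc W.simps(3))
      have split: "Dset n i v = Dset n i' v \<union> {i' * Suc n + v}"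
        by (auto simp: Dset_def Suc lessThan_Suc)
      have IH1: "nfa_run (Aut n) (Dset n i' v) (W i' (n - v)) \<subseteq> Dset n i' n"
        using less.hyps[of i' v] Suc less.prems by simp
      have loop: "nfa_run (Aut n) {i' * Suc n + v} (W i' (n - v)) = {i' * Suc n + v}"
        apply (rule run_fix)
        using W_set[of i' "n-v"] dec[OF i'n, of v] vn by (auto simp: tr_def)
      have step1: "nfa_run (Aut n) (Dset n i v) (W i' (n - v)) \<subseteq> Dset n i' n \<union> {i' * Suc n + v}"
        using split IH1 loop run_Un by (metis Un_mono subset_refl)
      have step2: "nfa_run (Aut n) (Dset n i' n \<union> {i' * Suc n + v}) [i'] \<subseteq> Dset n i (Suc v)"
      proof -
        have "tr n q i' = {}" if qD: "q \<in> Dset n i' n" for q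
        proof -
          obtain j where j: "j < i'" "q = j * Suc n + n" using qD unfolding Dset_def by blast
          have jn: "j < n" using j i'n by simp
          show ?thesis using dec[OF jn, of n] j i'n by (simp add: tr_def)
        qed
        moreover have "tr n (i' * Suc n + v) i' = Dset n i (Suc v)"
          using dec[OF i'n, of v] vn Suc by (simp add: tr_def)
        moreover have "nfa_run (Aut n) (Dset n i' n \<union> {i' * Suc n + v}) [i']
            = (\<Union>q\<in>Dset n i' n. tr n q i') \<union> tr n (i' * Suc n + v) i'"
          by (simp only: run_Cons run_Nil trans_Aut UN_Un UN_insert UN_empty Un_empty_right)
        ultimately show ?thesis by simp
      qed
      have IH2: "nfa_run (Aut n) (Dset n i (Suc v)) (W i (n - Suc v)) \<subseteq> Dset n i n"
        using less.hyps[of i "Suc v"] Suc less.prems vn by simp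
      have "nfa_run (Aut n) (Dset n i v) (W i (n - v))
          = nfa_run (Aut n) (nfa_run (Aut n) (nfa_run (Aut n) (Dset n i v) (W i' (n - v))) [i']) (W i (n - Suc v))"
        unfolding Wsplit run_append ..
      also have "\<dots> \<subseteq> nfa_run (Aut n) (nfa_run (Aut n) (Dset n i' n \<union> {i' * Suc n + v}) [i']) (W i (n - Suc v))"
        by (intro run_mono step1)
      also have "\<dots> \<subseteq> nfa_run (Aut n) (Dset n i (Suc v)) (W i (n - Suc v))"
        by (intro run_mono step2)
      also have "\<dots> \<subseteq> Dset n i n" by (rule IH2)
      finally show ?thesis .
    qed
  qed
qed


lemma LB: "i \<le> n \<Longrightarrow> v \<le> n \<Longrightarrow> w \<in> lists {..<n} \<Longrightarrow> length w < length (W i (n - v)) \<Longrightarrow>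
  \<exists>q\<in>nfa_run (Aut n) (Dset n i v) w.
     q = n * Suc n \<or> (q < n * Suc n \<and> q div Suc n < i \<and> q mod Suc n < n)"
proof (induction "i + (n - v)" arbitrary: i v w rule: less_induct)
  case less
  show ?case
  proof (cases i)
    case 0 then show ?thesis using less.prems by simp
  next
    case (Suc i')
    show ?thesis
    proof (cases "v = n")
      case True then show ?thesis using less.prems Suc by simp
    next
      case False
      then have vn: "v < n" using less by simp
      have i'n: "i' < n" using Suc less by simp
      define q0 where "q0 = i' * Suc n + v"
      have q0D: "q0 \<in> Dset n i v" by (auto simp: Dset_def q0_def Suc)
      have q0d: "q0 div Suc n = i'" "q0 mod Suc n = v" "q0 < n * Suc n"
        using dec[OF i'n, of v] vn by (simp_all add: q0_def)
      define x where "x = takeWhile (\<lambda>a. a < i') w"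
      define r where "r = dropWhile (\<lambda>a. a < i') w"
      have wxr: "w = x @ r" by (simp add: x_def r_def)
      have loopx: "nfa_run (Aut n) {q0} x = {q0}"
        apply (rule run_fix)
        using q0d by (auto simp: tr_def x_def dest: set_takeWhileD)
      have runx: "q0 \<in> nfa_run (Aut n) (Dset n i v) x"
        using run_mono[of "{q0}" "Dset n i v" "Aut n" x] q0D loopx by auto
      have Fin: "n * Suc n \<in> nfa_run (Aut n) (Dset n i v) w"
        if "q \<in> nfa_run (Aut n) (Dset n i v) x" "n * Suc n \<in> tr n q a" "r = a # y" for q a y
      proof -
        have "nfa_run (Aut n) (Dset n i v) w = nfa_run (Aut n) (\<Union>q\<in>nfa_run (Aut n) (Dset n i v) x. tr n q a) y"
          using wxr that(3) by (simp add: run_append run_Cons)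
        also have "\<dots> \<supseteq> nfa_run (Aut n) {n * Suc n} y"
          using that(1,2) by (intro run_mono) blast
        finally show ?thesis by (simp add: run_F)
      qed
      show ?thesis
      proof (cases r)
        case Nil
        then have "q0 \<in> nfa_run (Aut n) (Dset n i v) w" using runx wxr by simp
        moreover have "q0 < n * Suc n \<and> q0 div Suc n < i \<and> q0 mod Suc n < n"
          using q0d vn Suc by simp
        ultimately show ?thesis by blast
      next
        case (Cons a y)
        have ai: "\<not> a < i'" using Cons hd_dropWhile[of "\<lambda>a. a < i'" w] r_def by auto
        have an: "a < n" using less.prems(3) wxr Cons by auto
        show ?thesis
        proof (cases "a = i'")
          case False
          then have "n * Suc n \<in> tr n q0 a" using ai an q0d vn by (simp add: tr_def)
          then show ?thesis using Fin[OF runx _ Cons] by blast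
        next
          case True
          show ?thesis
          proof (cases "length x < length (W i' (n - v))")
            case True
            have xl: "x \<in> lists {..<n}" using less.prems(3) wxr by auto
            obtain q where q: "q \<in> nfa_run (Aut n) (Dset n i' v) x"
              "q = n * Suc n \<or> (q < n * Suc n \<and> q div Suc n < i' \<and> q mod Suc n < n)"
              using less.hyps[of i' v x] Suc less.prems xl True by auto
            have "Dset n i' v \<subseteq> Dset n i v" by (auto simp: Dset_def Suc)
            then have q': "q \<in> nfa_run (Aut n) (Dset n i v) x" using q(1) run_mono by blast
            have "n * Suc n \<in> tr n q a"
              using q(2) \<open>a = i'\<close> i'n by (auto simp: tr_def)
            then show ?thesis using Fin[OF q' _ Cons] by blast
          next
            case False
            have Wsplit: "W i (n - v) = W i' (n - v) @ [i'] @ W i (n - Suc v)"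
              using vn Suc by (metis Suc_diff_Suc W.simps(3))
            have yl: "length y < length (W i (n - Suc v))"
              using less.prems(4) wxr Cons False Wsplit by simp
            have yl2: "y \<in> lists {..<n}" using less.prems(3) wxr Cons by auto
            obtain q where q: "q \<in> nfa_run (Aut n) (Dset n i (Suc v)) y"
              "q = n * Suc n \<or> (q < n * Suc n \<and> q div Suc n < i \<and> q mod Suc n < n)"
            proof -
              have "i + (n - Suc v) < i + (n - v)" using vn by simp
              then show ?thesis using that less.hyps[of i "Suc v" y] Suc less.prems vn yl yl2 by auto
            qed
            have tq0: "tr n q0 a = Dset n i (Suc v)"
              using q0d vn Suc \<open>a = i'\<close> by (simp add: tr_def)
            have "nfa_run (Aut n) (Dset n i v) w = nfa_run (Aut n) (\<Union>q\<in>nfa_run (Aut n) (Dset n i v) x. tr n q a) y"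
              using wxr Cons by (simp add: run_append run_Cons)
            also have "\<dots> \<supseteq> nfa_run (Aut n) (Dset n i (Suc v)) y"
              using runx tq0 by (intro run_mono) blast
            finally show ?thesis using q by blast
          qed
        qed
      qed
    qed
  qed
qed

definition rk :: "nat \<Rightarrow> nat \<Rightarrow> nat" where
  "rk n q = (if q < n * Suc n then q mod Suc n else Suc n)"

lemma tr_cases: "tr n q a = {q} \<or> (\<forall>q'\<in>tr n q a. rk n q < rk n q')"
proof (cases "q < n * Suc n")
  case True
  have dq: "q div Suc n < n" using div_lt[OF True] .
  have mq: "q mod Suc n < Suc n" by simp
  show ?thesis
  proof -
    have "rk n q < rk n q'" if "q' \<in> tr n q a" "\<not> a < q div Suc n" for q'
    proof (cases "a = q div Suc n")
      case True
      have m1: "q' \<in> Dset n (Suc (q div Suc n)) (Suc (q mod Suc n))" "q mod Suc n < n"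
        using that True \<open>q < n * Suc n\<close> by (auto simp: tr_def split: if_splits)
      then obtain j where j: "j < Suc (q div Suc n)" "q' = j * Suc n + Suc (q mod Suc n)"
        "q mod Suc n < n" unfolding Dset_def by blast
      have jn: "j < n" using j dq by simp
      have "rk n q' = Suc (q mod Suc n)"
        using dec[OF jn, of "Suc (q mod Suc n)"] j by (simp add: rk_def del: add_Suc_right)
      then show ?thesis using True \<open>q < n * Suc n\<close> by (simp add: rk_def)
    next
      case False
      then have "q' = n * Suc n" "q mod Suc n < n"
        using that \<open>q < n * Suc n\<close> by (auto simp: tr_def split: if_splits)
      then show ?thesis using \<open>q < n * Suc n\<close> by (simp add: rk_def)
    qed
    then show ?thesis using True by (auto simp: tr_def)
  qed
next
  case False
  then show ?thesis by (auto simp: tr_def)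
qed

lemma run_rk: "q \<in> nfa_run (Aut n) {p} w \<Longrightarrow> q = p \<or> rk n p < rk n q"
proof (induction w arbitrary: q rule: rev_induct)
  case Nil then show ?case by (simp add: run_Nil)
next
  case (snoc a w)
  then obtain q' where q': "q' \<in> nfa_run (Aut n) {p} w" "q \<in> tr n q' a"
    by (auto simp: run_append run_Cons run_Nil)
  have "q = q' \<or> rk n q' < rk n q" using tr_cases[of n q' a] q'(2) by auto
  then show ?case using snoc.IH[OF q'(1)] by auto
qed

lemma rpo: "n \<ge> 1 \<Longrightarrow> rpoNFA (Aut n)"
proof -
  assume n1: "n \<ge> 1"
  have F: "n * Suc n < n * (n + 2)" using n1 by simp
  have F': "n * Suc n < n * Suc (Suc n)" using n1 by simp
  have nfa: "nfa (Aut n)"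
    unfolding nfa_def
  proof (intro conjI ballI)
    show "finite (states (Aut n))" by (simp add: Aut_def)
    show "finite (alpha (Aut n))" by (simp add: Aut_def)
    show "init (Aut n) \<subseteq> states (Aut n)"
    proof
      fix q assume "q \<in> init (Aut n)"
      then obtain j where "j < n" "q = j * Suc n + 0" by (auto simp: Aut_def Dset_def)
      then have "q < n * Suc n" using dec(3)[of j n 0] by simp
      then have "q < n * (n + 2)" using F F' by linarith
      then show "q \<in> states (Aut n)" by (simp add: Aut_def)
    qed
    have st: "q \<in> states (Aut n)" if "q \<le> n * Suc n" for q
    proof -
      have "q < n * (n + 2)" using that F by linarith
      then show ?thesis by (simp add: Aut_def)
    qed
    show "fin (Aut n) \<subseteq> states (Aut n)"
    proof
      fix q assume "q \<in> fin (Aut n)"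
      then have "q \<le> n * Suc n" by (auto simp: Aut_def)
      then show "q \<in> states (Aut n)" by (rule st)
    qed
    fix q a assume "q \<in> states (Aut n)" "a \<in> alpha (Aut n)"
    show "trans (Aut n) q a \<subseteq> states (Aut n)"
    proof
      fix q' assume q': "q' \<in> trans (Aut n) q a"
      have "q' \<le> n * Suc n"
      proof (cases "q < n * Suc n")
        case True
        have dq: "q div Suc n < n" using div_lt[OF True] .
        show ?thesis
        proof (cases "a = q div Suc n")
          case True
          have m1: "q' \<in> Dset n (Suc (q div Suc n)) (Suc (q mod Suc n))" "q mod Suc n < n"
            using q' True \<open>q < n * Suc n\<close> by (auto simp: tr_def Aut_def split: if_splits)
          then obtain j where j: "j < Suc (q div Suc n)" "q' = j * Suc n + Suc (q mod Suc n)"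
            "q mod Suc n < n" unfolding Dset_def by blast
          have jn: "j < n" using j dq by simp
          have "q' < n * Suc n" using dec(3)[OF jn, of "Suc (q mod Suc n)"] j by simp
          then show ?thesis by simp
        next
          case False
          then show ?thesis using q' True by (auto simp: tr_def Aut_def split: if_splits)
        qed
      next
        case False
        then show ?thesis using q' by (auto simp: tr_def Aut_def split: if_splits)
      qed
      then show "q' \<in> states (Aut n)" by (rule st)
    qed
  qed
  have po: "poNFA (Aut n)"
    unfolding poNFA_def reach_def
  proof (intro conjI nfa ballI impI)
    fix p q assume "(\<exists>w\<in>lists (alpha (Aut n)). q \<in> nfa_run (Aut n) {p} w) \<and>
      (\<exists>w\<in>lists (alpha (Aut n)). p \<in> nfa_run (Aut n) {q} w)"
    then obtain w1 w2 where "q \<in> nfa_run (Aut n) {p} w1" "p \<in> nfa_run (Aut n) {q} w2" by blast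
    then have "q = p \<or> rk n p < rk n q" "p = q \<or> rk n q < rk n p" using run_rk by blast+
    then show "p = q" by auto
  qed
  show ?thesis unfolding rpoNFA_def using po tr_cases by fastforce
qed

lemma foldl_in: "dfa D \<Longrightarrow> q \<in> dstates D \<Longrightarrow> set x \<subseteq> dalpha D \<Longrightarrow> foldl (dtrans D) q x \<in> dstates D"
  by (induction x arbitrary: q) (auto simp: dfa_def)

lemma dfa_lb:
  assumes D: "dfa D" and w: "w \<in> lists (dalpha D)" "w \<notin> dfa_lang D"
    and sh: "\<forall>u\<in>lists (dalpha D). length u < length w \<longrightarrow> u \<in> dfa_lang D"
  shows "length w + 1 \<le> card (dstates D)"
proof -
  define g where "g t = foldl (dtrans D) (dinit D) (take t w)" for t
  have ne: "g s \<noteq> g t" if st: "s < t" "t \<le> length w" for s t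
  proof
    assume eq: "g s = g t"
    define u where "u = take s w @ drop t w"
    have ul: "u \<in> lists (dalpha D)" using w(1) by (auto simp: u_def dest: in_set_takeD in_set_dropD)
    have "length u < length w" using st by (simp add: u_def)
    then have "u \<in> dfa_lang D" using sh ul by blast
    moreover have "foldl (dtrans D) (dinit D) u = foldl (dtrans D) (dinit D) w"
    proof -
      have "foldl (dtrans D) (dinit D) u = foldl (dtrans D) (g s) (drop t w)" by (simp add: u_def g_def)
      also have "\<dots> = foldl (dtrans D) (g t) (drop t w)" using eq by simp
      also have "\<dots> = foldl (dtrans D) (dinit D) w"
        using foldl_append[of "dtrans D" "dinit D" "take t w" "drop t w"] by (simp add: g_def)
      finally show ?thesis .
    qed
    ultimately show False using w ul by (simp add: dfa_lang_def)
  qed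
  have inj: "inj_on g {..length w}"
    unfolding inj_on_def
  proof (intro ballI impI)
    fix s t assume "s \<in> {..length w}" "t \<in> {..length w}" "g s = g t"
    then show "s = t" using ne[of s t] ne[of t s] by (cases "s < t"; cases "t < s") auto
  qed
  have sub: "g ` {..length w} \<subseteq> dstates D"
  proof
    fix q assume "q \<in> g ` {..length w}"
    then obtain t where "q = g t" by blast
    moreover have "set (take t w) \<subseteq> dalpha D" using w(1) by (auto dest: in_set_takeD)
    ultimately show "q \<in> dstates D" using foldl_in[OF D] D by (auto simp: g_def dfa_def)
  qed
  have "card {..length w} \<le> card (dstates D)"
    using card_inj_on_le[OF inj sub] D by (simp add: dfa_def)
  then show ?thesis by simp
qed

theorem mainTheorem15:
  fixes n :: nat
  assumes "n \<ge> 1"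
  shows "\<exists>A :: (nat, nat) nfa.
    rpoNFA A \<and> card (alpha A) = n \<and> card (states A) = n * (n + 2) \<and>
    (\<exists>w\<in>lists (alpha A). w \<notin> nfa_lang A \<and> length w = (2 * n choose n) - 1) \<and>
    (\<forall>w\<in>lists (alpha A). length w < (2 * n choose n) - 1 \<longrightarrow> w \<in> nfa_lang A) \<and>
    (\<forall>D :: ('q, nat) dfa. dfa D \<and> dalpha D = alpha A \<and> dfa_lang D = nfa_lang A
        \<longrightarrow> card (dstates D) \<ge> (2 * n choose n))"
proof -
  let ?A = "Aut n"
  have len: "length (W n n) = (2 * n choose n) - 1" by (simp add: W_len mult_2)
  have Wl: "W n n \<in> lists (alpha ?A)" using W_set[of n n] by (auto simp: Aut_def)
  have disj: "Dset n n n \<inter> fin ?A = {}"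
  proof -
    have "q \<notin> fin ?A" if qD: "q \<in> Dset n n n" for q
    proof -
      obtain j where j: "j < n" "q = j * Suc n + n" using qD unfolding Dset_def by blast
      show ?thesis using dec[OF j(1), of n] j by (auto simp: Aut_def)
    qed
    then show ?thesis by blast
  qed
  have Wrej: "W n n \<notin> nfa_lang ?A"
  proof
    assume "W n n \<in> nfa_lang ?A"
    then have "nfa_run ?A (Dset n n 0) (W n n) \<inter> fin ?A \<noteq> {}"
      by (simp add: nfa_lang_def Aut_def)
    moreover have "nfa_run ?A (Dset n n 0) (W n n) \<subseteq> Dset n n n"
      using R[of n n 0] by simp
    ultimately show False using disj by blast
  qed
  have short: "\<forall>w\<in>lists (alpha ?A). length w < (2 * n choose n) - 1 \<longrightarrow> w \<in> nfa_lang ?A"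
  proof (intro ballI impI)
    fix w assume wl: "w \<in> lists (alpha ?A)" and lw: "length w < (2 * n choose n) - 1"
    have wl': "w \<in> lists {..<n}" using wl by (simp add: Aut_def)
    obtain q where q: "q \<in> nfa_run ?A (Dset n n 0) w"
      "q = n * Suc n \<or> (q < n * Suc n \<and> q div Suc n < n \<and> q mod Suc n < n)"
      using LB[of n n 0 w] wl' lw len by auto
    have "q \<in> fin ?A" using q(2) by (auto simp: Aut_def)
    then show "w \<in> nfa_lang ?A" using q(1) wl by (auto simp: nfa_lang_def Aut_def)
  qed
  have pos: "(2 * n choose n) \<ge> 1" using zero_less_binomial[of n "2 * n"] by linarith
  have dfa: "\<forall>D :: ('q, nat) dfa. dfa D \<and> dalpha D = alpha ?A \<and> dfa_lang D = nfa_lang ?A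
        \<longrightarrow> card (dstates D) \<ge> (2 * n choose n)"
  proof (intro allI impI)
    fix D :: "('q, nat) dfa"
    assume H: "dfa D \<and> dalpha D = alpha ?A \<and> dfa_lang D = nfa_lang ?A"
    have "length (W n n) + 1 \<le> card (dstates D)"
      using dfa_lb[of D "W n n"] H Wl Wrej short len by auto
    then show "card (dstates D) \<ge> (2 * n choose n)" using len pos by simp
  qed
  have "card (alpha ?A) = n" "card (states ?A) = n * (n + 2)" by (simp_all add: Aut_def)
  then show ?thesis using rpo[OF assms] Wl Wrej len short dfa by blast
qed

end
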